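(* For each $\alpha\in\mathbb{Q}\cap[0,1]$ and each $\varepsilon>0$, there is a finite set $\Psi$ of definable predicates that weakly defines an $\varepsilon$-distal cell decomposition over $M_{[0,1]}$ for $\varphi_\alpha(x;y)$.
   Context: $M_{[0,1]}$ is the set of continuous nondecreasing functions $f:[0,1]\to[0,1]$ with $f(0)=0$, $f(1)=1$, with the sup metric, regarded as a metric structure in the language of binary predicates $\varphi_\alpha$ ($\alpha\in\mathbb{Q}\cap[0,1]$), where $\varphi_\alpha(f,g)=f(t)$ for any $t$ with $f(t)+g(t)=\alpha$ (independent of the choice of $t$). If $\phi(x;y)$ is a definable predicate and $\Psi$ is a finite set of definable predicates each of the form $\psi(x;y_1,\dots,y_k)$, then $\Psi$ weakly defines an $\varepsilon$-distal cell decomposition over $M$ for $\phi(x;y)$ if for every finite $B\subseteq M^y$ with $|B|\geq 2$ and every $a\in M^x$, there are $\psi\in\Psi$ and $b_1,\dots,b_k\in B$ such that $\psi(a;b_1,\dots,b_k)>0$ and for all $a'\in M^x$, $\psi(a';b_1,\dots,b_k)>0$ implies $|\phi(a;b)-\phi(a';b)|\leq\varepsilon$ for all $b\in B$. *)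

theory Defs
  imports "HOL-Analysis.Analysis"
begin

definition Mset :: "(real \<Rightarrow> real) set" where
  "Mset = {f. continuous_on {0..1} f \<and> mono_on {0..1} f \<and> f 0 = 0 \<and> f 1 = 1
              \<and> (\<forall>t. t \<notin> {0..1} \<longrightarrow> f t = 0)}"

definition dM :: "(real \<Rightarrow> real) \<Rightarrow> (real \<Rightarrow> real) \<Rightarrow> real" where
  "dM f g = (SUP t\<in>{0..1}. \<bar>f t - g t\<bar>)"

definition phiA :: "real \<Rightarrow> (real \<Rightarrow> real) \<Rightarrow> (real \<Rightarrow> real) \<Rightarrow> real" where
  "phiA \<alpha> f g = f (SOME t. t \<in> {0..1} \<and> f t + g t = \<alpha>)"

text \<open>Interpretations in M of continuous-logic formulas, with variables indexed by nat
  (assignments nat => M).\<close>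

inductive_set Fm :: "((nat \<Rightarrow> (real \<Rightarrow> real)) \<Rightarrow> real) set" where
  atom_d: "(\<lambda>a. dM (a i) (a j)) \<in> Fm"
| atom_phi: "\<alpha> \<in> \<rat> \<Longrightarrow> 0 \<le> \<alpha> \<Longrightarrow> \<alpha> \<le> 1 \<Longrightarrow> (\<lambda>a. phiA \<alpha> (a i) (a j)) \<in> Fm"
| conn: "(\<forall>i<n. P i \<in> Fm) \<Longrightarrow>
         continuous_on {v :: nat \<Rightarrow> real. \<forall>i. v i \<in> {0..1}} u \<Longrightarrow>
         u ` {v. \<forall>i. v i \<in> {0..1}} \<subseteq> {0..1} \<Longrightarrow>
         (\<lambda>a. u (\<lambda>i. if i < n then P i a else 0)) \<in> Fm"
| sup: "P \<in> Fm \<Longrightarrow> (\<lambda>a. SUP m\<in>Mset. P (a(i := m))) \<in> Fm"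
| inf: "P \<in> Fm \<Longrightarrow> (\<lambda>a. INF m\<in>Mset. P (a(i := m))) \<in> Fm"

definition definable_pred :: "nat \<Rightarrow> ((nat \<Rightarrow> (real \<Rightarrow> real)) \<Rightarrow> real) \<Rightarrow> bool" where
  "definable_pred n Q \<longleftrightarrow>
     (\<forall>a b. (\<forall>i. a i \<in> Mset) \<longrightarrow> (\<forall>i. b i \<in> Mset) \<longrightarrow> (\<forall>i<n. a i = b i) \<longrightarrow> Q a = Q b) \<and>
     (\<forall>e>0. \<exists>P\<in>Fm. \<forall>a. (\<forall>i. a i \<in> Mset) \<longrightarrow> \<bar>Q a - P a\<bar> \<le> e)"

text \<open>Assignment x := a, y_1..y_k := bs (variable 0 is x, variables 1..k are y_1..y_k).\<close>
definition asg :: "(real \<Rightarrow> real) \<Rightarrow> (real \<Rightarrow> real) list \<Rightarrow> nat \<Rightarrow> (real \<Rightarrow> real)" where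
  "asg a bs = (\<lambda>i. if i = 0 then a else if i \<le> length bs then bs ! (i - 1) else a)"

text \<open>Psi is a set of pairs (k, psi) with psi(x; y_1..y_k) a definable predicate in k+1 variables.
  Weak definition of an eps-distal cell decomposition over M for phi_alpha(x;y).\<close>
definition weakly_defines_distal_cd ::
  "(nat \<times> ((nat \<Rightarrow> (real \<Rightarrow> real)) \<Rightarrow> real)) set \<Rightarrow> real \<Rightarrow> real \<Rightarrow> bool" where
  "weakly_defines_distal_cd \<Psi> \<epsilon> \<alpha> \<longleftrightarrow>
    (\<forall>B. finite B \<and> B \<subseteq> Mset \<and> card B \<ge> 2 \<longrightarrow>
      (\<forall>a\<in>Mset. \<exists>(k, \<psi>)\<in>\<Psi>. \<exists>bs. length bs = k \<and> set bs \<subseteq> B \<and>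
          \<psi> (asg a bs) > 0 \<and>
          (\<forall>a'\<in>Mset. \<psi> (asg a' bs) > 0 \<longrightarrow>
              (\<forall>b\<in>B. \<bar>phiA \<alpha> a b - phiA \<alpha> a' b\<bar> \<le> \<epsilon>))))"

end

theory Submission
  imports Defs
begin



lemma MsetD:
  assumes "f \<in> Mset"
  shows "continuous_on {0..1} f" "mono_on {0..1} f" "f 0 = 0" "f 1 = 1"
  using assms by (auto simp: Mset_def)

lemma Mset_mono: "f \<in> Mset \<Longrightarrow> 0 \<le> s \<Longrightarrow> s \<le> t \<Longrightarrow> t \<le> 1 \<Longrightarrow> f s \<le> f t"
  by (auto simp: Mset_def intro: mono_onD)

lemma Mset_range: "f \<in> Mset \<Longrightarrow> 0 \<le> t \<Longrightarrow> t \<le> 1 \<Longrightarrow> 0 \<le> f t \<and> f t \<le> 1"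
  using Mset_mono[of f 0 t] Mset_mono[of f t 1] by (auto simp: Mset_def)

lemma crossing_ex:
  assumes "x \<in> Mset" "b \<in> Mset" "0 \<le> \<alpha>" "\<alpha> \<le> 1"
  shows "\<exists>t. t \<in> {0..1} \<and> x t + b t = \<alpha>"
proof -
  have c: "continuous_on {0..1} (\<lambda>t. x t + b t)"
    using MsetD[OF assms(1)] MsetD[OF assms(2)] by (intro continuous_intros) auto
  have "(\<lambda>t. x t + b t) 0 \<le> \<alpha>" "\<alpha> \<le> (\<lambda>t. x t + b t) 1"
    using MsetD[OF assms(1)] MsetD[OF assms(2)] assms by auto
  from IVT'[OF this _ c] show ?thesis by auto
qed

lemma crossing_unique:
  assumes "x \<in> Mset" "b \<in> Mset" "t1 \<in> {0..1}" "t2 \<in> {0..1}"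
    "x t1 + b t1 = \<alpha>" "x t2 + b t2 = \<alpha>"
  shows "x t1 = x t2"
proof (cases "t1 \<le> t2")
  case True
  then show ?thesis using Mset_mono[OF assms(1), of t1 t2] Mset_mono[OF assms(2), of t1 t2] assms by auto
next
  case False
  then show ?thesis using Mset_mono[OF assms(1), of t2 t1] Mset_mono[OF assms(2), of t2 t1] assms by auto
qed

lemma phiA_eq:
  assumes "x \<in> Mset" "b \<in> Mset" "0 \<le> \<alpha>" "\<alpha> \<le> 1" "t \<in> {0..1}" "x t + b t = \<alpha>"
  shows "phiA \<alpha> x b = x t"
proof -
  let ?s = "SOME t. t \<in> {0..1} \<and> x t + b t = \<alpha>"
  have "?s \<in> {0..1} \<and> x ?s + b ?s = \<alpha>"
    using someI_ex[OF crossing_ex[OF assms(1-4)]] .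
  then show ?thesis unfolding phiA_def using crossing_unique[OF assms(1,2)] assms(5,6) by blast
qed

lemma phiA_ex:
  assumes "x \<in> Mset" "b \<in> Mset" "0 \<le> \<alpha>" "\<alpha> \<le> 1"
  obtains t where "t \<in> {0..1}" "x t + b t = \<alpha>" "phiA \<alpha> x b = x t"
  using crossing_ex[OF assms] phiA_eq[OF assms] by blast

lemma phiA_range:
  assumes "x \<in> Mset" "b \<in> Mset" "0 \<le> \<alpha>" "\<alpha> \<le> 1"
  shows "0 \<le> phiA \<alpha> x b \<and> phiA \<alpha> x b \<le> 1"
  using phiA_ex[OF assms] Mset_range[OF assms(1)] by (metis atLeastAtMost_iff)

lemma phiA_sym:
  assumes "x \<in> Mset" "b \<in> Mset" "0 \<le> \<alpha>" "\<alpha> \<le> 1"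
  shows "phiA \<alpha> b x = \<alpha> - phiA \<alpha> x b"
proof -
  obtain t where t: "t \<in> {0..1}" "x t + b t = \<alpha>" "phiA \<alpha> x b = x t" using phiA_ex[OF assms] .
  have "phiA \<alpha> b x = b t" using phiA_eq[OF assms(2,1,3,4) t(1)] t(2) by (simp add: add.commute)
  then show ?thesis using t by simp
qed

lemma phiA_gt:
  assumes "x \<in> Mset" "b \<in> Mset" "0 \<le> \<alpha>" "\<alpha> \<le> 1"
  shows "phiA \<alpha> x b > c \<longleftrightarrow> (\<exists>t\<in>{0..1}. b t < \<alpha> - c \<and> x t > c)"
proof
  assume "phiA \<alpha> x b > c"
  then show "\<exists>t\<in>{0..1}. b t < \<alpha> - c \<and> x t > c"
  proof -
    obtain t where t: "t \<in> {0..1}" "x t + b t = \<alpha>" "phiA \<alpha> x b = x t" using phiA_ex[OF assms] .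
    then show ?thesis using \<open>phiA \<alpha> x b > c\<close> by (intro bexI[of _ t]) auto
  qed
next
  assume "\<exists>t\<in>{0..1}. b t < \<alpha> - c \<and> x t > c"
  then obtain t0 where t0: "t0 \<in> {0..1}" "b t0 < \<alpha> - c" "x t0 > c" by blast
  obtain s where s: "s \<in> {0..1}" "x s + b s = \<alpha>" "phiA \<alpha> x b = x s" using phiA_ex[OF assms] .
  show "phiA \<alpha> x b > c"
  proof (cases "c < 0")
    case True
    have "0 \<le> x s" using Mset_range[OF assms(1), of s] s(1) by auto
    then show ?thesis using s(3) True by linarith
  next
    case False
    define \<eta> where "\<eta> = min (x t0 - c) (\<alpha> - c - b t0)"
    have eta: "\<eta> > 0" using t0 by (simp add: \<eta>_def)
    have cx: "continuous_on {0..t0} x"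
      using MsetD(1)[OF assms(1)] by (rule continuous_on_subset) (use t0(1) in auto)
    have e1: "\<eta> \<le> x t0 - c" "\<eta> \<le> \<alpha> - c - b t0" by (simp_all add: \<eta>_def)
    have "x 0 \<le> c + \<eta>/2" "c + \<eta>/2 \<le> x t0"
      using MsetD(3)[OF assms(1)] False eta e1 by linarith+
    from IVT'[of x 0 "c + \<eta>/2" t0, OF this _ cx] t0(1)
    obtain t' where t': "0 \<le> t'" "t' \<le> t0" "x t' = c + \<eta>/2" by auto
    have "b t' \<le> b t0" using Mset_mono[OF assms(2), of t' t0] t' t0 by auto
    then have sum: "x t' + b t' < \<alpha>" using t' eta e1 by linarith
    show ?thesis
    proof (cases "t' \<le> s")
      case True
      then have "x t' \<le> x s" using Mset_mono[OF assms(1), of t' s] t' s by auto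
      then show ?thesis using s t' eta by auto
    next
      case False
      then have "x s \<le> x t'" "b s \<le> b t'" using Mset_mono[OF assms(1), of s t'] Mset_mono[OF assms(2), of s t'] t' t0 s by auto
      then show ?thesis using sum s by auto
    qed
  qed
qed

lemma phiA_lt:
  assumes "x \<in> Mset" "b \<in> Mset" "0 \<le> \<alpha>" "\<alpha> \<le> 1"
  shows "phiA \<alpha> x b < c \<longleftrightarrow> (\<exists>t\<in>{0..1}. b t > \<alpha> - c \<and> x t < c)"
proof -
  have "phiA \<alpha> x b < c \<longleftrightarrow> phiA \<alpha> b x > \<alpha> - c" using phiA_sym[OF assms] by auto
  also have "\<dots> \<longleftrightarrow> (\<exists>t\<in>{0..1}. x t < \<alpha> - (\<alpha> - c) \<and> b t > \<alpha> - c)"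
    by (rule phiA_gt[OF assms(2,1,3,4)])
  finally show ?thesis by auto
qed


lemma segs_lt:
  assumes "b1 \<in> Mset" "b2 \<in> Mset"
  shows "{t\<in>{0..1}. b1 t < d} \<subseteq> {t\<in>{0..1}. b2 t < d} \<or> {t\<in>{0..1}. b2 t < d} \<subseteq> {t\<in>{0..1}. b1 t < d}"
proof (rule ccontr)
  assume "\<not> ?thesis"
  then obtain t1 t2 where t: "t1 \<in> {0..1}" "b1 t1 < d" "\<not> b2 t1 < d" "t2 \<in> {0..1}" "b2 t2 < d" "\<not> b1 t2 < d"
    by blast
  show False
  proof (cases "t1 \<le> t2")
    case True then show False using Mset_mono[OF assms(2), of t1 t2] t by auto
  next
    case False then show False using Mset_mono[OF assms(1), of t2 t1] t by auto
  qed
qed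

lemma segs_gt:
  assumes "b1 \<in> Mset" "b2 \<in> Mset"
  shows "{t\<in>{0..1}. b1 t > d} \<subseteq> {t\<in>{0..1}. b2 t > d} \<or> {t\<in>{0..1}. b2 t > d} \<subseteq> {t\<in>{0..1}. b1 t > d}"
proof (rule ccontr)
  assume "\<not> ?thesis"
  then obtain t1 t2 where t: "t1 \<in> {0..1}" "b1 t1 > d" "\<not> b2 t1 > d" "t2 \<in> {0..1}" "b2 t2 > d" "\<not> b1 t2 > d"
    by blast
  show False
  proof (cases "t1 \<le> t2")
    case True then show False using Mset_mono[OF assms(1), of t1 t2] t by auto
  next
    case False then show False using Mset_mono[OF assms(2), of t2 t1] t by auto
  qed
qed



lemma grid:
  fixes v v' \<epsilon> :: real and N :: nat
  assumes e: "\<epsilon> > 0" and N: "N = nat \<lceil>1/\<epsilon>\<rceil> + 1"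
    and v: "0 \<le> v" "v \<le> 1" and v': "0 \<le> v'" "v' \<le> 1"
    and H: "\<forall>j\<le>N. (v > real j * \<epsilon> \<longrightarrow> v' > real j * \<epsilon>) \<and> (v < real j * \<epsilon> \<longrightarrow> v' < real j * \<epsilon>)"
  shows "\<bar>v - v'\<bar> \<le> \<epsilon>"
proof -
  have key: "\<exists>j\<le>N. w < real j * \<epsilon> \<and> real j * \<epsilon> \<le> w + \<epsilon>" if w: "0 \<le> w" "w \<le> 1" for w
  proof -
    define j where "j = nat \<lfloor>w/\<epsilon>\<rfloor> + 1"
    have f0: "0 \<le> \<lfloor>w/\<epsilon>\<rfloor>" using w e by simp
    have rj: "real j = of_int \<lfloor>w/\<epsilon>\<rfloor> + 1" using f0 by (simp add: j_def)
    have a1: "of_int \<lfloor>w/\<epsilon>\<rfloor> \<le> w/\<epsilon>" by (rule of_int_floor_le)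
    have a2: "w/\<epsilon> < of_int \<lfloor>w/\<epsilon>\<rfloor> + 1" by (rule real_of_int_floor_add_one_gt)
    have "w < real j * \<epsilon>"
    proof -
      have "w = (w/\<epsilon>) * \<epsilon>" using e by simp
      also have "\<dots> < (of_int \<lfloor>w/\<epsilon>\<rfloor> + 1) * \<epsilon>" using a2 e by (intro mult_strict_right_mono) auto
      finally show ?thesis using rj by simp
    qed
    moreover have "real j * \<epsilon> \<le> w + \<epsilon>"
    proof -
      have "of_int \<lfloor>w/\<epsilon>\<rfloor> * \<epsilon> \<le> (w/\<epsilon>) * \<epsilon>" using a1 e by (intro mult_right_mono) auto
      then show ?thesis using rj e by (simp add: algebra_simps)
    qed
    moreover have "j \<le> N"
    proof -
      have "w/\<epsilon> \<le> 1/\<epsilon>" using w e by (simp add: divide_right_mono)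
      then have "\<lfloor>w/\<epsilon>\<rfloor> \<le> \<lfloor>1/\<epsilon>\<rfloor>" by (rule floor_mono)
      moreover have "\<lfloor>1/\<epsilon>\<rfloor> \<le> \<lceil>1/\<epsilon>\<rceil>" by (rule floor_le_ceiling)
      ultimately have "\<lfloor>w/\<epsilon>\<rfloor> \<le> \<lceil>1/\<epsilon>\<rceil>" by linarith
      then show ?thesis unfolding j_def N using f0 by linarith
    qed
    ultimately show ?thesis by blast
  qed
  show ?thesis
  proof (rule ccontr)
    assume "\<not> ?thesis"
    then have "v' > v + \<epsilon> \<or> v > v' + \<epsilon>" by auto
    then show False
    proof
      assume a: "v' > v + \<epsilon>"
      obtain j where j: "j \<le> N" "v < real j * \<epsilon>" "real j * \<epsilon> \<le> v + \<epsilon>" using key[OF v] by blast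
      have "v < real j * \<epsilon> \<longrightarrow> v' < real j * \<epsilon>" using H j(1) by blast
      then show False using j a by linarith
    next
      assume a: "v > v' + \<epsilon>"
      obtain j where j: "j \<le> N" "v' < real j * \<epsilon>" "real j * \<epsilon> \<le> v' + \<epsilon>" using key[OF v'] by blast
      have "v > real j * \<epsilon> \<longrightarrow> v' > real j * \<epsilon>" using H j(1) by blast
      then show False using j a by linarith
    qed
  qed
qed



lemma finite_total_min:
  assumes "finite G" "G \<noteq> {}" "\<And>x y. x\<in>G \<Longrightarrow> y\<in>G \<Longrightarrow> R x y \<or> R y x"
    "\<And>x y z. x\<in>G \<Longrightarrow> y\<in>G \<Longrightarrow> z\<in>G \<Longrightarrow> R x y \<Longrightarrow> R y z \<Longrightarrow> R x z"
  shows "\<exists>m\<in>G. \<forall>g\<in>G. R m g"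
  using assms
proof (induction G rule: finite_ne_induct)
  case (singleton x)
  have "R x x" using singleton.prems(1)[of x x] by simp
  then show ?case by simp
next
  case (insert x F)
  have p1: "R a b \<or> R b a" if "a \<in> F" "b \<in> F" for a b using insert.prems(1)[of a b] that by simp
  have p2: "R a c" if "a\<in>F" "b\<in>F" "c\<in>F" "R a b" "R b c" for a b c
    using insert.prems(2)[of a b c] that by simp
  have ex: "\<exists>m\<in>F. \<forall>g\<in>F. R m g" by (rule insert.IH[OF p1 p2])
  then obtain m where m: "m \<in> F" "\<forall>g\<in>F. R m g" by blast
  show ?case
  proof (cases "R x m")
    case True
    have "R x x" using insert.prems(1)[of x x] by simp
    moreover have "R x g" if "g \<in> F" for g
      using insert.prems(2)[of x m g] True m that by simp
    ultimately show ?thesis by auto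
  next
    case False
    then have "R m x" using insert.prems(1)[of x m] m by auto
    then show ?thesis using m by auto
  qed
qed


definition lvl :: "real \<Rightarrow> nat \<times> bool \<Rightarrow> real" where
  "lvl \<epsilon> js = real (fst js) * \<epsilon>"

definition test :: "real \<Rightarrow> nat \<times> bool \<Rightarrow> real \<Rightarrow> bool" where
  "test \<epsilon> js y = (if snd js then y > lvl \<epsilon> js else y < lvl \<epsilon> js)"

definition Rel :: "real \<Rightarrow> real \<Rightarrow> nat \<times> bool \<Rightarrow> (real \<Rightarrow> real) \<Rightarrow> (real \<Rightarrow> real) \<Rightarrow> bool" where
  "Rel \<alpha> \<epsilon> js b1 b2 = (\<forall>x\<in>Mset. test \<epsilon> js (phiA \<alpha> x b1) \<longrightarrow> test \<epsilon> js (phiA \<alpha> x b2))"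

lemma Rel_total:
  assumes "b1 \<in> Mset" "b2 \<in> Mset" "0 \<le> \<alpha>" "\<alpha> \<le> 1"
  shows "Rel \<alpha> \<epsilon> js b1 b2 \<or> Rel \<alpha> \<epsilon> js b2 b1"
proof (cases "snd js")
  case True
  let ?c = "lvl \<epsilon> js"
  have eq: "test \<epsilon> js (phiA \<alpha> x b) \<longleftrightarrow> (\<exists>t\<in>{t\<in>{0..1}. b t < \<alpha> - ?c}. x t > ?c)"
    if "x \<in> Mset" "b \<in> Mset" for x b
    using phiA_gt[OF that assms(3,4), of ?c] True by (auto simp: test_def)
  from segs_lt[OF assms(1,2), of "\<alpha> - ?c"] show ?thesis
  proof
    assume "{t\<in>{0..1}. b1 t < \<alpha> - ?c} \<subseteq> {t\<in>{0..1}. b2 t < \<alpha> - ?c}"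
    then have "Rel \<alpha> \<epsilon> js b1 b2" unfolding Rel_def using eq assms by blast
    then show ?thesis ..
  next
    assume "{t\<in>{0..1}. b2 t < \<alpha> - ?c} \<subseteq> {t\<in>{0..1}. b1 t < \<alpha> - ?c}"
    then have "Rel \<alpha> \<epsilon> js b2 b1" unfolding Rel_def using eq assms by blast
    then show ?thesis ..
  qed
next
  case False
  let ?c = "lvl \<epsilon> js"
  have eq: "test \<epsilon> js (phiA \<alpha> x b) \<longleftrightarrow> (\<exists>t\<in>{t\<in>{0..1}. b t > \<alpha> - ?c}. x t < ?c)"
    if "x \<in> Mset" "b \<in> Mset" for x b
    using phiA_lt[OF that assms(3,4), of ?c] False by (auto simp: test_def)
  from segs_gt[OF assms(1,2), of "\<alpha> - ?c"] show ?thesis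
  proof
    assume "{t\<in>{0..1}. b1 t > \<alpha> - ?c} \<subseteq> {t\<in>{0..1}. b2 t > \<alpha> - ?c}"
    then have "Rel \<alpha> \<epsilon> js b1 b2" unfolding Rel_def using eq assms by blast
    then show ?thesis ..
  next
    assume "{t\<in>{0..1}. b2 t > \<alpha> - ?c} \<subseteq> {t\<in>{0..1}. b1 t > \<alpha> - ?c}"
    then have "Rel \<alpha> \<epsilon> js b2 b1" unfolding Rel_def using eq assms by blast
    then show ?thesis ..
  qed
qed



definition hfun :: "real \<Rightarrow> nat \<times> bool \<Rightarrow> real \<Rightarrow> real" where
  "hfun \<epsilon> js y = (if snd js then max 0 (min 1 (y - lvl \<epsilon> js)) else max 0 (min 1 (lvl \<epsilon> js - y)))"

lemma hfun_pos: "hfun \<epsilon> js y > 0 \<longleftrightarrow> test \<epsilon> js y"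
  by (auto simp: hfun_def test_def)

lemma hfun_range: "0 \<le> hfun \<epsilon> js y" "hfun \<epsilon> js y \<le> 1"
  by (auto simp: hfun_def)

lemma hfun_cont: "continuous_on S (\<lambda>w::nat \<Rightarrow> real. hfun \<epsilon> js (w i))"
proof -
  have p: "continuous_on S (\<lambda>w::nat \<Rightarrow> real. w i)"
    by (rule continuous_on_subset[OF continuous_on_product_coordinates]) auto
  show ?thesis unfolding hfun_def
    by (cases "snd js") (auto intro!: continuous_intros p)
qed

definition psi :: "real \<Rightarrow> real \<Rightarrow> (nat \<times> bool) list \<Rightarrow> (nat \<Rightarrow> (real \<Rightarrow> real)) \<Rightarrow> real" where
  "psi \<alpha> \<epsilon> cs = (\<lambda>v. \<Prod>i<length cs. hfun \<epsilon> (cs!i) (phiA \<alpha> (v 0) (v (Suc i))))"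

lemma psi_Fm:
  assumes "\<alpha> \<in> \<rat>" "0 \<le> \<alpha>" "\<alpha> \<le> 1"
  shows "psi \<alpha> \<epsilon> cs \<in> Fm"
proof -
  define n where "n = length cs"
  define P where "P = (\<lambda>i (a :: nat \<Rightarrow> (real \<Rightarrow> real)). phiA \<alpha> (a 0) (a (Suc i)))"
  define u where "u = (\<lambda>w::nat \<Rightarrow> real. \<Prod>i<n. hfun \<epsilon> (cs!i) (w i))"
  have eq: "psi \<alpha> \<epsilon> cs = (\<lambda>a. u (\<lambda>i. if i < n then P i a else 0))"
    unfolding psi_def u_def P_def n_def by (intro ext prod.cong) auto
  have "(\<lambda>a. u (\<lambda>i. if i < n then P i a else 0)) \<in> Fm"
  proof (rule Fm.conn)
    show "\<forall>i<n. P i \<in> Fm" unfolding P_def using assms by (auto intro: Fm.atom_phi)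
    show "continuous_on {v. \<forall>i. v i \<in> {0..1}} u" unfolding u_def
      by (intro continuous_on_prod hfun_cont)
    show "u ` {v. \<forall>i. v i \<in> {0..1}} \<subseteq> {0..1}" unfolding u_def
      by (auto intro!: prod_nonneg prod_le_1 simp: hfun_range)
  qed
  then show ?thesis using eq by simp
qed

lemma psi_def_pred:
  assumes "\<alpha> \<in> \<rat>" "0 \<le> \<alpha>" "\<alpha> \<le> 1"
  shows "definable_pred (Suc (length cs)) (psi \<alpha> \<epsilon> cs)"
  unfolding definable_pred_def
proof (intro conjI allI impI)
  fix a b :: "nat \<Rightarrow> real \<Rightarrow> real"
  assume "\<forall>i<Suc (length cs). a i = b i"
  then show "psi \<alpha> \<epsilon> cs a = psi \<alpha> \<epsilon> cs b" unfolding psi_def by (intro prod.cong) auto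
next
  fix e :: real assume "e > 0"
  then show "\<exists>P\<in>Fm. \<forall>a. (\<forall>i. a i \<in> Mset) \<longrightarrow> \<bar>psi \<alpha> \<epsilon> cs a - P a\<bar> \<le> e"
    using psi_Fm[OF assms] by (intro bexI[of _ "psi \<alpha> \<epsilon> cs"]) auto
qed

lemma psi_asg:
  assumes "length bs = length cs"
  shows "psi \<alpha> \<epsilon> cs (asg x bs) = (\<Prod>i<length cs. hfun \<epsilon> (cs!i) (phiA \<alpha> x (bs!i)))"
  unfolding psi_def asg_def using assms by (intro prod.cong) auto

lemma psi_pos:
  assumes "length bs = length cs"
  shows "psi \<alpha> \<epsilon> cs (asg x bs) > 0 \<longleftrightarrow> (\<forall>i<length cs. test \<epsilon> (cs!i) (phiA \<alpha> x (bs!i)))"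
proof -
  let ?f = "\<lambda>i. hfun \<epsilon> (cs!i) (phiA \<alpha> x (bs!i))"
  have "(\<Prod>i<length cs. ?f i) > 0 \<longleftrightarrow> (\<forall>i<length cs. ?f i > 0)"
  proof
    assume "(\<Prod>i<length cs. ?f i) > 0"
    then have "(\<Prod>i<length cs. ?f i) \<noteq> 0" by (metis order_less_irrefl)
    then have "\<forall>i<length cs. ?f i \<noteq> 0" using prod_zero_iff[of "{..<length cs}" ?f] by auto
    then show "\<forall>i<length cs. ?f i > 0" using hfun_range(1) by (metis less_eq_real_def)
  next
    assume "\<forall>i<length cs. ?f i > 0"
    then show "(\<Prod>i<length cs. ?f i) > 0" by (intro prod_pos) auto
  qed
  then show ?thesis using psi_asg[OF assms] hfun_pos by simp
qed




theorem mainTheorem5: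
  fixes \<alpha> \<epsilon> :: real
  assumes "\<alpha> \<in> \<rat>" and "0 \<le> \<alpha>" and "\<alpha> \<le> 1" and "\<epsilon> > 0"
  shows "\<exists>\<Psi>. finite \<Psi> \<and> (\<forall>(k, \<psi>)\<in>\<Psi>. definable_pred (Suc k) \<psi>) \<and>
             weakly_defines_distal_cd \<Psi> \<epsilon> \<alpha>"
proof -
  define N where "N = nat \<lceil>1/\<epsilon>\<rceil> + 1"
  define C where "C = {0..<Suc N} \<times> (UNIV :: bool set)"
  define L where "L = length (List.product [0..<Suc N] [True, False])"
  define \<Psi> where "\<Psi> = (\<lambda>cs. (length cs, psi \<alpha> \<epsilon> cs)) ` {cs. set cs \<subseteq> C \<and> length cs \<le> L}"
  have fin: "finite \<Psi>" unfolding \<Psi>_def C_def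
    by (intro finite_imageI finite_lists_length_le) auto
  have dp: "\<forall>(k, \<psi>)\<in>\<Psi>. definable_pred (Suc k) \<psi>"
    unfolding \<Psi>_def using psi_def_pred[OF assms(1-3)] by auto
  have wd: "weakly_defines_distal_cd \<Psi> \<epsilon> \<alpha>"
    unfolding weakly_defines_distal_cd_def
  proof (intro allI impI ballI)
    fix B a
    assume B: "finite B \<and> B \<subseteq> Mset \<and> 2 \<le> card B" and a: "a \<in> Mset"
    define G where "G = (\<lambda>js. {b\<in>B. test \<epsilon> js (phiA \<alpha> a b)})"
    have ex: "\<exists>m. G js \<noteq> {} \<longrightarrow> m \<in> G js \<and> (\<forall>g\<in>G js. Rel \<alpha> \<epsilon> js m g)" for js
    proof (cases "G js = {}")
      case False
      have "\<exists>m\<in>G js. \<forall>g\<in>G js. Rel \<alpha> \<epsilon> js m g"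
      proof (rule finite_total_min)
        show "finite (G js)" using B by (simp add: G_def)
        show "G js \<noteq> {}" by fact
        show "Rel \<alpha> \<epsilon> js x y \<or> Rel \<alpha> \<epsilon> js y x" if "x \<in> G js" "y \<in> G js" for x y
          using Rel_total[of x y \<alpha> \<epsilon> js] that B assms(2,3) by (auto simp: G_def)
        show "Rel \<alpha> \<epsilon> js x z" if "x \<in> G js" "y \<in> G js" "z \<in> G js" "Rel \<alpha> \<epsilon> js x y" "Rel \<alpha> \<epsilon> js y z" for x y z
          using that unfolding Rel_def by blast
      qed
      then show ?thesis by blast
    qed auto
    have "\<forall>js. \<exists>m. G js \<noteq> {} \<longrightarrow> m \<in> G js \<and> (\<forall>g\<in>G js. Rel \<alpha> \<epsilon> js m g)" using ex by blast
    from choice[OF this] obtain m where m0: "\<forall>js. G js \<noteq> {} \<longrightarrow> m js \<in> G js \<and> (\<forall>g\<in>G js. Rel \<alpha> \<epsilon> js (m js) g)"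
      by blast
    have m: "m js \<in> G js \<and> (\<forall>g\<in>G js. Rel \<alpha> \<epsilon> js (m js) g)" if "G js \<noteq> {}" for js
      using m0 that by blast
    define fl where "fl = filter (\<lambda>js. G js \<noteq> {}) (List.product [0..<Suc N] [True, False])"
    define bs where "bs = map m fl"
    have lbs: "length bs = length fl" by (simp add: bs_def)
    have inPsi: "(length fl, psi \<alpha> \<epsilon> fl) \<in> \<Psi>"
    proof -
      have "set fl \<subseteq> C" unfolding fl_def C_def by auto
      moreover have "length fl \<le> L" unfolding fl_def L_def by (rule length_filter_le)
      ultimately show ?thesis unfolding \<Psi>_def by blast
    qed
    have flG: "js \<in> set fl \<Longrightarrow> G js \<noteq> {}" for js by (simp add: fl_def)
    have bsB: "set bs \<subseteq> B"
    proof
      fix b assume "b \<in> set bs"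
      then obtain js where "js \<in> set fl" "b = m js" by (auto simp: bs_def)
      then show "b \<in> B" using m[OF flG] by (auto simp: G_def)
    qed
    have bsi: "bs ! i = m (fl ! i)" if "i < length fl" for i using that by (simp add: bs_def)
    have posa: "psi \<alpha> \<epsilon> fl (asg a bs) > 0"
      unfolding psi_pos[OF lbs]
    proof (intro allI impI)
      fix i assume i: "i < length fl"
      then have "fl ! i \<in> set fl" by simp
      then have "m (fl ! i) \<in> G (fl ! i)" using m flG by blast
      then show "test \<epsilon> (fl ! i) (phiA \<alpha> a (bs ! i))" using bsi[OF i] by (simp add: G_def)
    qed
    have close: "\<forall>b\<in>B. \<bar>phiA \<alpha> a b - phiA \<alpha> a' b\<bar> \<le> \<epsilon>"
      if a': "a' \<in> Mset" and pos: "psi \<alpha> \<epsilon> fl (asg a' bs) > 0" for a'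
    proof
      fix b assume b: "b \<in> B"
      have bM: "b \<in> Mset" using b B by auto
      have T: "test \<epsilon> js (phiA \<alpha> a' (m js))" if jin: "js \<in> set fl" for js
      proof -
        obtain i where i: "i < length fl" "fl ! i = js" using jin by (auto simp: in_set_conv_nth)
        have "\<forall>i<length fl. test \<epsilon> (fl!i) (phiA \<alpha> a' (bs!i))" using pos psi_pos[OF lbs] by blast
        then have "test \<epsilon> (fl!i) (phiA \<alpha> a' (bs!i))" using i(1) by blast
        then show ?thesis using i bsi[OF i(1)] by simp
      qed
      have trans: "test \<epsilon> js (phiA \<alpha> a' b)" if js: "fst js \<le> N" and t: "test \<epsilon> js (phiA \<alpha> a b)" for js
      proof -
        have bG: "b \<in> G js" using b t by (simp add: G_def)
        then have ne: "G js \<noteq> {}" by auto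
        obtain j s where jsd: "js = (j, s)" by (cases js)
        have "j < Suc N" using js jsd by simp
        moreover have "s \<in> set [True, False]" by (cases s) auto
        ultimately have "js \<in> set (List.product [0..<Suc N] [True, False])" using jsd by (auto simp del: upt_Suc)
        then have "js \<in> set fl" unfolding fl_def using ne by simp
        then have "test \<epsilon> js (phiA \<alpha> a' (m js))" by (rule T)
        moreover have "Rel \<alpha> \<epsilon> js (m js) b" using m[OF ne] bG by blast
        ultimately show ?thesis using a' unfolding Rel_def by blast
      qed
      show "\<bar>phiA \<alpha> a b - phiA \<alpha> a' b\<bar> \<le> \<epsilon>"
      proof (rule grid[OF assms(4) N_def])
        show "0 \<le> phiA \<alpha> a b" "phiA \<alpha> a b \<le> 1" using phiA_range[OF a bM assms(2,3)] by auto
        show "0 \<le> phiA \<alpha> a' b" "phiA \<alpha> a' b \<le> 1" using phiA_range[OF a' bM assms(2,3)] by auto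
        show "\<forall>j\<le>N. (phiA \<alpha> a b > real j * \<epsilon> \<longrightarrow> phiA \<alpha> a' b > real j * \<epsilon>) \<and>
                   (phiA \<alpha> a b < real j * \<epsilon> \<longrightarrow> phiA \<alpha> a' b < real j * \<epsilon>)"
        proof (intro allI impI conjI)
          fix j assume j: "j \<le> N"
          show "phiA \<alpha> a' b > real j * \<epsilon>" if "phiA \<alpha> a b > real j * \<epsilon>"
            using trans[of "(j, True)"] j that by (simp add: test_def lvl_def)
          show "phiA \<alpha> a' b < real j * \<epsilon>" if "phiA \<alpha> a b < real j * \<epsilon>"
            using trans[of "(j, False)"] j that by (simp add: test_def lvl_def)
        qed
      qed
    qed
    show "\<exists>(k, \<psi>)\<in>\<Psi>. \<exists>bs. length bs = k \<and> set bs \<subseteq> B \<and> \<psi> (asg a bs) > 0 \<and>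
          (\<forall>a'\<in>Mset. \<psi> (asg a' bs) > 0 \<longrightarrow> (\<forall>b\<in>B. \<bar>phiA \<alpha> a b - phiA \<alpha> a' b\<bar> \<le> \<epsilon>))"
    proof (rule bexI[OF _ inPsi], simp only: case_prod_conv)
      show "\<exists>bs'. length bs' = length fl \<and> set bs' \<subseteq> B \<and> psi \<alpha> \<epsilon> fl (asg a bs') > 0 \<and>
          (\<forall>a'\<in>Mset. psi \<alpha> \<epsilon> fl (asg a' bs') > 0 \<longrightarrow> (\<forall>b\<in>B. \<bar>phiA \<alpha> a b - phiA \<alpha> a' b\<bar> \<le> \<epsilon>))"
        using lbs bsB posa close by blast
    qed
  qed
  show ?thesis using fin dp wd by blast
qed


end
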